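(* Let $p_0, p_1, p_2, \ldots$ be a sequence of probability densities on $\mathbb{R}$, where for each $i \geq 0$ the density $p_i$ (the one-step-ahead predictive density of $Y_{i+1}$ given $y_{1:i}$) may depend on the observations $y_{1:i}$, and let $P_i$ denote the distribution function of $p_i$. Then the sequence satisfies the martingale condition $$\int p_{i+1}(y)\, p_{i}(y_{i+1})\, dy_{i+1} = p_{i}(y) \quad \text{for each } y \in \mathbb{R} \text{ and each } i \geq 0$$ (where $p_{i+1}$ depends on $y_{i+1}$) if and only if there exists a unique sequence of bivariate copula densities $c_1, c_2, \ldots$ such that $$p_{i+1}(y) = c_{i+1}\{P_i(y), P_i(y_{i+1})\}\, p_i(y)$$ for all $i \in \{0,1,\ldots\}$.
   Context: A bivariate copula is a bivariate cumulative distribution function on $[0,1]^2$ with uniform marginals; a bivariate copula density is its density $c:[0,1]^2 \to [0,\infty)$. The copula densities $c_{i+1}$ may depend on $y_{1:i}$. *)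

theory Defs
  imports "HOL-Analysis.Analysis"
begin

definition prob_density :: "(real \<Rightarrow> real) \<Rightarrow> bool" where
  "prob_density f \<longleftrightarrow> f \<in> borel_measurable lborel \<and> (\<forall>x. 0 \<le> f x)
     \<and> (\<integral>\<^sup>+ x. ennreal (f x) \<partial>lborel) = 1"

definition dens_cdf :: "(real \<Rightarrow> real) \<Rightarrow> real \<Rightarrow> real" where
  "dens_cdf f y = (LINT x:{..y}|lborel. f x)"

definition biv_cdf :: "(real \<Rightarrow> real \<Rightarrow> real) \<Rightarrow> real \<Rightarrow> real \<Rightarrow> ennreal" where
  "biv_cdf c a b = (\<integral>\<^sup>+ w. indicator ({0..a} \<times> {0..b}) w * ennreal (c (fst w) (snd w))
                       \<partial>(lborel \<Otimes>\<^sub>M lborel))"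

definition copula_density :: "(real \<Rightarrow> real \<Rightarrow> real) \<Rightarrow> bool" where
  "copula_density c \<longleftrightarrow> (\<lambda>w. c (fst w) (snd w)) \<in> borel_measurable (lborel \<Otimes>\<^sub>M lborel)
     \<and> (\<forall>u\<in>{0..1}. \<forall>v\<in>{0..1}. 0 \<le> c u v)
     \<and> (\<forall>a\<in>{0..1}. biv_cdf c a 1 = ennreal a \<and> biv_cdf c 1 a = ennreal a)"

text \<open>p i ys y: the predictive density of Y_{i+1} at y given the observations ys = y_{1:i}
  (only lists of length i are meaningful).  Martingale condition (densities read a.e.).\<close>
definition martingale_cond :: "(nat \<Rightarrow> real list \<Rightarrow> real \<Rightarrow> real) \<Rightarrow> bool" where
  "martingale_cond p \<longleftrightarrow> (\<forall>i ys. length ys = i \<longrightarrow>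
     (AE y in lborel. (\<integral>z. p (Suc i) (ys @ [z]) y * p i ys z \<partial>lborel) = p i ys y))"

text \<open>c (Suc i) ys is the copula density c_{i+1} (depending on ys = y_{1:i}).
  The update p_{i+1}(y) = c_{i+1}(P_i y, P_i y_{i+1}) p_i(y) holds for almost every (y, y_{i+1})
  with p_i(y_{i+1}) > 0 (the conditional density is only determined there).\<close>
definition copula_rep :: "(nat \<Rightarrow> real list \<Rightarrow> real \<Rightarrow> real) \<Rightarrow>
    (nat \<Rightarrow> real list \<Rightarrow> real \<Rightarrow> real \<Rightarrow> real) \<Rightarrow> bool" where
  "copula_rep p c \<longleftrightarrow> (\<forall>i ys. length ys = i \<longrightarrow>
     copula_density (c (Suc i) ys) \<and>
     (AE w in lborel \<Otimes>\<^sub>M lborel. p i ys (snd w) \<noteq> 0 \<longrightarrow>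
        p (Suc i) (ys @ [snd w]) (fst w) =
          c (Suc i) ys (dens_cdf (p i ys) (fst w)) (dens_cdf (p i ys) (snd w)) * p i ys (fst w)))"

end

theory Submission
  imports Defs "HOL-Probability.Probability"
begin

definition Mu :: "(real \<Rightarrow> real) \<Rightarrow> real measure" where
  "Mu p = density lborel (\<lambda>x. ennreal (p x))"
definition Unif :: "real measure" where
  "Unif = density lborel (indicator {0<..<1::real})"
definition Qf :: "(real \<Rightarrow> real) \<Rightarrow> real \<Rightarrow> real" where
  "Qf p u = (if 0 < u \<and> u < 1 then Inf {x. u \<le> dens_cdf p x} else 0)"

lemma prob_space_Unif: "prob_space Unif"
  unfolding Unif_def
  by (rule prob_spaceI) (simp add: emeasure_density nn_integral_indicator)

lemma sets_Unif[simp, measurable_cong]: "sets Unif = sets borel"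
  by (simp add: Unif_def)

locale pdens = fixes p :: "real \<Rightarrow> real" assumes pd: "prob_density p"
begin

lemma p_meas[measurable]: "p \<in> borel_measurable borel"
  using pd unfolding prob_density_def by (simp add: measurable_lborel1)
lemma p_nn: "0 \<le> p x"
  using pd unfolding prob_density_def by simp
lemma p_int1: "(\<integral>\<^sup>+ x. ennreal (p x) \<partial>lborel) = 1"
  using pd unfolding prob_density_def by simp

lemma sets_Mu[simp, measurable_cong]: "sets (Mu p) = sets borel"
  by (simp add: Mu_def)

lemma prob_space_Mu: "prob_space (Mu p)"
  unfolding Mu_def by (rule prob_spaceI) (simp add: emeasure_density p_int1)

lemma real_distribution_Mu: "real_distribution (Mu p)"
  using prob_space_Mu by (simp add: real_distribution_def real_distribution_axioms_def)

lemma integrable_p: "integrable lborel p"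
  by (intro integrableI_nonneg) (auto simp: p_nn p_int1)

lemma dens_cdf_eq: "dens_cdf p = cdf (Mu p)"
proof
  fix y
  have "cdf (Mu p) y = enn2real (\<integral>\<^sup>+ x. ennreal (p x) * indicator {..y} x \<partial>lborel)"
    unfolding cdf_def Mu_def measure_def by (simp add: emeasure_density)
  also have "(\<integral>\<^sup>+ x. ennreal (p x) * indicator {..y} x \<partial>lborel)
      = (\<integral>\<^sup>+ x. ennreal (indicator {..y} x * p x) \<partial>lborel)"
    by (intro nn_integral_cong) (auto simp: indicator_def)
  also have "\<dots> = ennreal (LINT x|lborel. indicator {..y} x * p x)"
    using integrable_mult_indicator[OF _ integrable_p, of "{..y}"]
    by (intro nn_integral_eq_integral) (auto simp: p_nn)
  finally show "dens_cdf p y = cdf (Mu p) y"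
    using integral_nonneg[of "\<lambda>x. indicator {..y} x * p x"]
    by (simp add: dens_cdf_def set_lebesgue_integral_def p_nn)
qed

lemma P_mono: "x \<le> y \<Longrightarrow> dens_cdf p x \<le> dens_cdf p y"
  unfolding dens_cdf_eq using real_distribution_Mu
  by (simp add: real_distribution.finite_borel_measure_M finite_borel_measure.cdf_nondecreasing)

lemma P_nonneg: "0 \<le> dens_cdf p x"
  unfolding dens_cdf_eq by (simp add: cdf_def)

lemma P_le1: "dens_cdf p x \<le> 1"
  unfolding dens_cdf_eq using real_distribution_Mu
  by (simp add: real_distribution.cdf_bounded_prob)

lemma P_top: "(dens_cdf p \<longlongrightarrow> 1) at_top"
  unfolding dens_cdf_eq using real_distribution_Mu
  by (simp add: real_distribution.cdf_lim_at_top_prob)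

lemma P_bot: "(dens_cdf p \<longlongrightarrow> 0) at_bot"
  unfolding dens_cdf_eq using real_distribution_Mu
  by (simp add: real_distribution.finite_borel_measure_M finite_borel_measure.cdf_lim_at_bot)

lemma P_cont: "isCont (dens_cdf p) x"
proof -
  have "emeasure (Mu p) {x} = (\<integral>\<^sup>+ y. ennreal (p y) * indicator {x} y \<partial>lborel)"
    unfolding Mu_def by (simp add: emeasure_density)
  also have "\<dots> = (\<integral>\<^sup>+ (y::real). 0 \<partial>lborel)"
    using AE_lborel_singleton[of x] by (intro nn_integral_cong_AE) (auto elim!: eventually_mono)
  finally have "measure (Mu p) {x} = 0" by (simp add: measure_def)
  then show ?thesis unfolding dens_cdf_eq using real_distribution_Mu
    by (simp add: real_distribution.finite_borel_measure_M finite_borel_measure.isCont_cdf)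
qed

lemma P_contin: "continuous_on A (dens_cdf p)"
  using P_cont by (simp add: continuous_at_imp_continuous_on)

lemma P_meas[measurable]: "dens_cdf p \<in> borel_measurable borel"
  using P_contin[of UNIV] by (simp add: borel_measurable_continuous_onI)

lemma Q_props:
  assumes u: "0 < u" "u < 1"
  shows "dens_cdf p (Qf p u) = u" "\<And>y. Qf p u \<le> y \<longleftrightarrow> u \<le> dens_cdf p y"
proof -
  define S where "S = {x. u \<le> dens_cdf p x}"
  have Q: "Qf p u = Inf S" using u by (simp add: Qf_def S_def)
  have "\<forall>\<^sub>F x in at_top. u < dens_cdf p x"
    using P_top u by (simp add: order_tendstoD)
  then obtain a where a: "\<And>x. x \<ge> a \<Longrightarrow> u < dens_cdf p x"
    by (auto simp: eventually_at_top_linorder)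
  have "\<forall>\<^sub>F x in at_bot. dens_cdf p x < u"
    using P_bot u by (simp add: order_tendstoD)
  then obtain b where b: "\<And>x. x \<le> b \<Longrightarrow> dens_cdf p x < u"
    by (auto simp: eventually_at_bot_linorder)
  have ne: "S \<noteq> {}" using a[of a] unfolding S_def by (metis empty_iff mem_Collect_eq order_less_imp_le order_refl)
  have bdd: "bdd_below S"
    unfolding bdd_below_def S_def
    by (rule exI[of _ b]) (metis b linorder_not_le mem_Collect_eq order_less_imp_le)
  have cl: "closed S" unfolding S_def
    by (intro closed_Collect_le continuous_on_const P_contin)
  have inS: "Inf S \<in> S" by (rule closed_contains_Inf[OF ne bdd cl])
  show iff: "\<And>y. Qf p u \<le> y \<longleftrightarrow> u \<le> dens_cdf p y"
  proof
    fix y assume "Qf p u \<le> y"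
    then show "u \<le> dens_cdf p y" using inS Q P_mono[of "Inf S" y] by (auto simp: S_def)
  next
    fix y assume "u \<le> dens_cdf p y"
    then show "Qf p u \<le> y" using Q bdd by (auto simp: S_def intro: cInf_lower)
  qed
  have bQ: "b \<le> Inf S"
    using inS b by (metis S_def linorder_not_le mem_Collect_eq order_less_imp_le not_le)
  have "\<exists>x. b \<le> x \<and> x \<le> Inf S \<and> dens_cdf p x = u"
    by (rule IVT') (use b[of b] inS bQ P_contin in \<open>auto simp: S_def\<close>)
  then obtain x where x: "b \<le> x" "x \<le> Inf S" "dens_cdf p x = u" by blast
  then have "Inf S \<le> x" using iff[of x] Q by simp
  with x show "dens_cdf p (Qf p u) = u" using Q by simp
qed

lemma Q_meas[measurable]: "Qf p \<in> borel_measurable borel"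
proof (rule borel_measurable_piecewise_mono[of "{{..0}, {0<..<1}, {1..}}"])
  show "mono_on c (Qf p)" if "c \<in> {{..0}, {0<..<1}, {1..}}" for c
  proof -
    have "mono_on {0<..<1} (Qf p)"
    proof (rule mono_onI)
      fix r s :: real assume rs: "r \<in> {0<..<1}" "s \<in> {0<..<1}" "r \<le> s"
      then have "r \<le> dens_cdf p (Qf p s)" using Q_props(1)[of s] by simp
      then show "Qf p r \<le> Qf p s" using Q_props(2)[of r] rs by simp
    qed
    moreover have "mono_on {..0} (Qf p)" "mono_on {1..} (Qf p)"
      by (auto intro!: mono_onI simp: Qf_def)
    ultimately show ?thesis using that by auto
  qed
qed auto

lemma measure_Unif: "A \<in> sets borel \<Longrightarrow> measure Unif A = measure lborel (A \<inter> {0<..<1})"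
proof -
  assume A: "A \<in> sets borel"
  have "emeasure Unif A = (\<integral>\<^sup>+ x. indicator (A \<inter> {0<..<1}) x \<partial>lborel)"
  proof -
    have "(\<integral>\<^sup>+ x. indicator {0<..<1::real} x * indicator A x \<partial>lborel)
        = (\<integral>\<^sup>+ x. indicator (A \<inter> {0<..<1}) x \<partial>lborel)"
      by (rule nn_integral_cong) (simp split: split_indicator)
    then show ?thesis unfolding Unif_def using A by (subst emeasure_density) auto
  qed
  also have "\<dots> = emeasure lborel (A \<inter> {0<..<1})"
    using A by (simp add: nn_integral_indicator)
  finally show ?thesis by (simp add: measure_def)
qed

lemma Mu_distr: "Mu p = distr Unif lborel (Qf p)"
proof (rule cdf_unique[OF real_distribution_Mu])
  show "real_distribution (distr Unif lborel (Qf p))"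
    unfolding real_distribution_def real_distribution_axioms_def
    by (auto intro!: prob_space.prob_space_distr prob_space_Unif)
  show "cdf (Mu p) = cdf (distr Unif lborel (Qf p))"
  proof
    fix y
    have "cdf (distr Unif lborel (Qf p)) y = measure Unif (Qf p -` {..y})"
      unfolding cdf_def by (subst measure_distr) (auto simp: Unif_def)
    also have "\<dots> = measure lborel (Qf p -` {..y} \<inter> {0<..<1})"
      using measurable_sets[OF Q_meas, of "{..y}"] by (intro measure_Unif) simp
    also have "Qf p -` {..y} \<inter> {0<..<1} = {0<..<1} \<inter> {..dens_cdf p y}"
      using Q_props(2) by auto
    also have "measure lborel ({0<..<1} \<inter> {..dens_cdf p y}) = dens_cdf p y"
    proof (cases "dens_cdf p y < 1")
      case True
      then have "{0<..<1} \<inter> {..dens_cdf p y} = {0<..dens_cdf p y}" by auto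
      then show ?thesis using P_nonneg[of y] by simp
    next
      case False
      then have "dens_cdf p y = 1" using P_le1[of y] by simp
      moreover have "{0<..<1} \<inter> {..1::real} = {0<..<1}" by auto
      ultimately show ?thesis by simp
    qed
    finally show "cdf (Mu p) y = cdf (distr Unif lborel (Qf p)) y"
      by (simp add: dens_cdf_eq)
  qed
qed

lemma Unif_distr: "distr (Mu p) lborel (dens_cdf p) = Unif"
proof -
  have "distr (Mu p) lborel (dens_cdf p) = distr Unif lborel (\<lambda>u. dens_cdf p (Qf p u))"
    unfolding Mu_distr by (subst distr_distr) (auto simp: Unif_def comp_def)
  also have "\<dots> = distr Unif lborel (\<lambda>u. u)"
  proof (rule distr_cong_AE)
    show "AE x in Unif. dens_cdf p (Qf p x) = x"
      unfolding Unif_def by (subst AE_density) (auto simp: Q_props indicator_def)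
  qed (auto simp: Unif_def)
  also have "\<dots> = Unif" by (rule distr_id2) (simp add: Unif_def)
  finally show ?thesis .
qed

lemma AE_Unif: "(AE u in Unif. X u) \<longleftrightarrow> (AE u in lborel. 0 < u \<and> u < 1 \<longrightarrow> X u)"
  unfolding Unif_def by (subst AE_density) (auto simp: indicator_def)

lemma AE_Mu: "(AE y in Mu p. X y) \<longleftrightarrow> (AE y in lborel. 0 < p y \<longrightarrow> X y)"
  unfolding Mu_def by (subst AE_density) auto

lemma AE_Q_to_P:
  assumes X: "{x. X x} \<in> sets borel"
  assumes ae: "AE y in lborel. 0 < p y \<longrightarrow> X y"
  shows "AE u in lborel. 0 < u \<and> u < 1 \<longrightarrow> X (Qf p u)"
proof -
  have "AE y in Mu p. X y" using ae by (simp add: AE_Mu)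
  then have "AE u in Unif. X (Qf p u)"
    unfolding Mu_distr using X by (subst (asm) AE_distr_iff) (auto simp: Unif_def)
  then show ?thesis by (simp add: AE_Unif)
qed

lemma AE_P_to_U:
  assumes X: "{x. X x} \<in> sets borel"
  assumes ae: "AE u in lborel. 0 < u \<and> u < 1 \<longrightarrow> X u"
  shows "AE y in lborel. 0 < p y \<longrightarrow> X (dens_cdf p y)"
proof -
  have "AE u in Unif. X u" using ae by (simp add: AE_Unif)
  then have "AE y in Mu p. X (dens_cdf p y)"
    unfolding Unif_distr[symmetric] using X by (subst (asm) AE_distr_iff) (auto simp: Mu_def)
  then show ?thesis by (simp add: AE_Mu)
qed

lemma good_ae: "AE y in lborel. 0 < p y \<longrightarrow>
    Qf p (dens_cdf p y) = y \<and> 0 < dens_cdf p y \<and> dens_cdf p y < 1"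
proof -
  have "AE u in Unif. Qf p (dens_cdf p (Qf p u)) = Qf p u \<and> 0 < dens_cdf p (Qf p u) \<and> dens_cdf p (Qf p u) < 1"
    by (simp add: AE_Unif Q_props)
  then have "AE y in Mu p. Qf p (dens_cdf p y) = y \<and> 0 < dens_cdf p y \<and> dens_cdf p y < 1"
    unfolding Mu_distr by (subst AE_distr_iff) (auto simp: Unif_def)
  then show ?thesis by (subst (asm) AE_Mu)
qed

lemma nn_P:
  assumes [measurable]: "g \<in> borel_measurable borel"
  shows "(\<integral>\<^sup>+ y. ennreal (p y) * g (dens_cdf p y) \<partial>lborel) = (\<integral>\<^sup>+ u. indicator {0<..<1} u * g u \<partial>lborel)"
proof -
  have "(\<integral>\<^sup>+ y. ennreal (p y) * g (dens_cdf p y) \<partial>lborel) = (\<integral>\<^sup>+ y. g (dens_cdf p y) \<partial>Mu p)"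
    unfolding Mu_def by (subst nn_integral_density) auto
  also have "\<dots> = (\<integral>\<^sup>+ u. g u \<partial>distr (Mu p) lborel (dens_cdf p))"
    by (subst nn_integral_distr) (auto simp: Mu_def)
  also have "\<dots> = (\<integral>\<^sup>+ u. indicator {0<..<1} u * g u \<partial>lborel)"
    unfolding Unif_distr unfolding Unif_def by (subst nn_integral_density) auto
  finally show ?thesis .
qed

lemma nn_Q:
  assumes [measurable]: "f \<in> borel_measurable borel"
  shows "(\<integral>\<^sup>+ y. ennreal (p y) * f y \<partial>lborel) = (\<integral>\<^sup>+ u. indicator {0<..<1} u * f (Qf p u) \<partial>lborel)"
proof -
  have "(\<integral>\<^sup>+ y. ennreal (p y) * f y \<partial>lborel) = (\<integral>\<^sup>+ y. f y \<partial>Mu p)"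
    unfolding Mu_def by (subst nn_integral_density) auto
  also have "\<dots> = (\<integral>\<^sup>+ u. f (Qf p u) \<partial>Unif)"
    unfolding Mu_distr by (subst nn_integral_distr) (auto simp: Unif_def)
  also have "\<dots> = (\<integral>\<^sup>+ u. indicator {0<..<1} u * f (Qf p u) \<partial>lborel)"
    unfolding Unif_def by (subst nn_integral_density) auto
  finally show ?thesis .
qed

end

definition mkcop :: "(real \<Rightarrow> real) \<Rightarrow> (real \<Rightarrow> real \<Rightarrow> real) \<Rightarrow> real \<Rightarrow> real \<Rightarrow> real" where
  "mkcop p q u v = (if 0 < u \<and> u < 1 \<and> 0 < v \<and> v < 1 \<and> 0 < p (Qf p u)
     then q (Qf p v) (Qf p u) / p (Qf p u) else 1)"

lemma biv1:
  assumes cm[measurable]: "(\<lambda>w. c (fst w) (snd w)) \<in> borel_measurable (lborel \<Otimes>\<^sub>M lborel)"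
  shows "biv_cdf c a b = (\<integral>\<^sup>+ u. indicator {0..a} u *
            (\<integral>\<^sup>+ v. indicator {0..b} v * ennreal (c u v) \<partial>lborel) \<partial>lborel)"
proof -
  have m: "(\<lambda>w. indicator ({0..a}\<times>{0..b}) w * ennreal (c (fst w) (snd w))) \<in> borel_measurable (lborel \<Otimes>\<^sub>M lborel)"
    by measurable
  have "biv_cdf c a b = (\<integral>\<^sup>+ u. \<integral>\<^sup>+ v. indicator ({0..a}\<times>{0..b}) (u, v) * ennreal (c u v) \<partial>lborel \<partial>lborel)"
    unfolding biv_cdf_def by (subst lborel.nn_integral_fst[OF m, symmetric]) simp
  also have "\<dots> = (\<integral>\<^sup>+ u. indicator {0..a} u *
            (\<integral>\<^sup>+ v. indicator {0..b} v * ennreal (c u v) \<partial>lborel) \<partial>lborel)"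
  proof (rule nn_integral_cong)
    fix u :: real
    have mu: "(\<lambda>v. c u v) \<in> borel_measurable lborel"
      using measurable_Pair2[OF cm, of u] by simp
    show "(\<integral>\<^sup>+ v. indicator ({0..a}\<times>{0..b}) (u, v) * ennreal (c u v) \<partial>lborel) =
        indicator {0..a} u * (\<integral>\<^sup>+ v. indicator {0..b} v * ennreal (c u v) \<partial>lborel)"
      using mu by (subst nn_integral_cmult[symmetric]) (auto intro!: nn_integral_cong simp: indicator_times mult.assoc)
  qed
  finally show ?thesis .
qed

lemma biv2:
  assumes cm[measurable]: "(\<lambda>w. c (fst w) (snd w)) \<in> borel_measurable (lborel \<Otimes>\<^sub>M lborel)"
  shows "biv_cdf c a b = (\<integral>\<^sup>+ v. indicator {0..b} v *
            (\<integral>\<^sup>+ u. indicator {0..a} u * ennreal (c u v) \<partial>lborel) \<partial>lborel)"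
proof -
  have m: "(\<lambda>w. indicator ({0..a}\<times>{0..b}) w * ennreal (c (fst w) (snd w))) \<in> borel_measurable (lborel \<Otimes>\<^sub>M lborel)"
    by measurable
  have "biv_cdf c a b = (\<integral>\<^sup>+ v. \<integral>\<^sup>+ u. indicator ({0..a}\<times>{0..b}) (u, v) * ennreal (c u v) \<partial>lborel \<partial>lborel)"
    unfolding biv_cdf_def by (subst lborel_pair.nn_integral_snd[OF m, symmetric]) simp
  also have "\<dots> = (\<integral>\<^sup>+ v. indicator {0..b} v *
            (\<integral>\<^sup>+ u. indicator {0..a} u * ennreal (c u v) \<partial>lborel) \<partial>lborel)"
  proof (rule nn_integral_cong)
    fix v :: real
    have mv: "(\<lambda>u. c u v) \<in> borel_measurable lborel"
      using measurable_Pair1[OF cm, of v] by simp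
    show "(\<integral>\<^sup>+ u. indicator ({0..a}\<times>{0..b}) (u, v) * ennreal (c u v) \<partial>lborel) =
        indicator {0..b} v * (\<integral>\<^sup>+ u. indicator {0..a} u * ennreal (c u v) \<partial>lborel)"
      using mv by (subst nn_integral_cmult[symmetric]) (auto intro!: nn_integral_cong simp: indicator_times mult.assoc mult.left_commute)
  qed
  finally show ?thesis .
qed

lemma split01:
  fixes h :: "real \<Rightarrow> ennreal"
  assumes hm[measurable]: "h \<in> borel_measurable lborel" and hle: "\<And>v. h v \<le> 1"
    and tot: "(\<integral>\<^sup>+ v. indicator {0..1} v * h v \<partial>lborel) = 1"
    and a: "0 \<le> a" "a \<le> 1"
  shows "(\<integral>\<^sup>+ v. indicator {0..a} v * h v \<partial>lborel) = ennreal a"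
proof -
  define X where "X = (\<integral>\<^sup>+ v. indicator {0..a} v * h v \<partial>lborel)"
  define Y where "Y = (\<integral>\<^sup>+ v. indicator {a<..1} v * h v \<partial>lborel)"
  have "X \<le> (\<integral>\<^sup>+ v. indicator {0..a} v \<partial>lborel)"
    unfolding X_def by (intro nn_integral_mono) (use hle in \<open>auto simp: indicator_def\<close>)
  then have X: "X \<le> ennreal a" using a by simp
  have "Y \<le> (\<integral>\<^sup>+ v. indicator {a<..1} v \<partial>lborel)"
    unfolding Y_def by (intro nn_integral_mono) (use hle in \<open>auto simp: indicator_def\<close>)
  then have Y: "Y \<le> ennreal (1 - a)" using a by simp
  have "X + Y = (\<integral>\<^sup>+ v. indicator {0..a} v * h v + indicator {a<..1} v * h v \<partial>lborel)"
    unfolding X_def Y_def by (subst nn_integral_add) auto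
  also have "\<dots> = (\<integral>\<^sup>+ v. indicator {0..1} v * h v \<partial>lborel)"
    using a by (intro nn_integral_cong) (auto simp: indicator_def)
  finally have XY: "X + Y = 1" using tot by simp
  obtain x where x: "X = ennreal x" "0 \<le> x" using X by (cases X) (auto simp: top_unique)
  obtain y where y: "Y = ennreal y" "0 \<le> y" using Y by (cases Y) (auto simp: top_unique)
  have "x \<le> a" using X x by (simp add: ennreal_le_iff[OF a(1)])
  moreover have "y \<le> 1 - a" using Y y a by simp
  moreover have "x + y = 1" using XY x y by (simp add: ennreal_plus[symmetric] del: ennreal_plus)
  ultimately have "x = a" by simp
  then show ?thesis using x X_def by simp
qed

locale pq = pdens p for p :: "real \<Rightarrow> real" + fixes q :: "real \<Rightarrow> real \<Rightarrow> real"
  assumes qd: "\<And>z. prob_density (q z)"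
  and qm: "(\<lambda>w. q (snd w) (fst w)) \<in> borel_measurable (lborel \<Otimes>\<^sub>M lborel)"
begin

definition qq :: "real \<times> real \<Rightarrow> real" where "qq w = q (snd w) (fst w)"

lemma qq_meas[measurable]: "qq \<in> borel_measurable (borel \<Otimes>\<^sub>M borel)"
  using qm unfolding qq_def by (simp add: measurable_lborel1 cong: measurable_cong_sets)

lemma q_comp[measurable (raw)]:
  "f \<in> borel_measurable M \<Longrightarrow> g \<in> borel_measurable M \<Longrightarrow> (\<lambda>x. q (g x) (f x)) \<in> borel_measurable M"
  using measurable_compose[of "\<lambda>x. (f x, g x)" M "borel \<Otimes>\<^sub>M borel" qq borel]
  by (simp add: qq_def)

lemma q_nn: "0 \<le> q z y" using pdens.p_nn[OF pdens.intro, OF qd] .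
lemma pnn: "0 \<le> p y" using p_nn .

lemma q_int1: "(\<integral>\<^sup>+ y. ennreal (q z y) \<partial>lborel) = 1" using pdens.p_int1[OF pdens.intro, OF qd] .

lemma total_1: "(\<integral>\<^sup>+ y. \<integral>\<^sup>+ z. ennreal (q z y * p z) \<partial>lborel \<partial>lborel) = 1"
proof -
  have "(\<integral>\<^sup>+ y. \<integral>\<^sup>+ z. ennreal (q z y * p z) \<partial>lborel \<partial>lborel)
      = (\<integral>\<^sup>+ z. \<integral>\<^sup>+ y. ennreal (q z y * p z) \<partial>lborel \<partial>lborel)"
    by (subst lborel_pair.Fubini') auto
  also have "\<dots> = (\<integral>\<^sup>+ z. ennreal (p z) * \<integral>\<^sup>+ y. ennreal (q z y) \<partial>lborel \<partial>lborel)"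
    by (intro nn_integral_cong)
       (auto simp: ennreal_mult pnn q_nn mult.commute nn_integral_cmult)
  also have "\<dots> = 1" by (simp add: q_int1 p_int1)
  finally show ?thesis .
qed

definition mart_g :: bool where
  "mart_g \<longleftrightarrow> (AE y in lborel. (\<integral>z. q z y * p z \<partial>lborel) = p y)"

lemma fin_ae: "AE y in lborel. (\<integral>\<^sup>+ z. ennreal (q z y * p z) \<partial>lborel) \<noteq> \<infinity>"
  by (rule nn_integral_PInf_AE) (auto simp: total_1)

lemma Mstar:
  assumes mart_g
  shows "AE y in lborel. (\<integral>\<^sup>+ z. ennreal (q z y * p z) \<partial>lborel) = ennreal (p y)"
  using fin_ae assms unfolding mart_g_def
proof eventually_elim
  case (elim y)
  have int: "integrable lborel (\<lambda>z. q z y * p z)"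
    using elim(1) by (intro integrableI_nonneg) (auto simp: q_nn pnn top.not_eq_extremum)
  show ?case using elim(2)
    by (subst nn_integral_eq_integral[OF int]) (auto simp: q_nn pnn)
qed

lemma zero_part:
  assumes mart_g
  shows "AE y in lborel. p y = 0 \<longrightarrow> (AE z in lborel. 0 < p z \<longrightarrow> q z y = 0)"
  using Mstar[OF assms]
proof eventually_elim
  case (elim y)
  show ?case
  proof
    assume "p y = 0"
    then have "(\<integral>\<^sup>+ z. ennreal (q z y * p z) \<partial>lborel) = 0" using elim by simp
    then have "AE z in lborel. ennreal (q z y * p z) = 0"
      by (subst (asm) nn_integral_0_iff_AE) auto
    then show "AE z in lborel. 0 < p z \<longrightarrow> q z y = 0"
      by eventually_elim (use q_nn[of _ y] pnn in \<open>auto simp: mult_le_0_iff\<close>)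
  qed
qed

abbreviation "P \<equiv> dens_cdf p"
abbreviation "Q \<equiv> Qf p"
abbreviation "cc \<equiv> mkcop p q"


lemma cc_comp[measurable (raw)]:
  assumes [measurable]: "f \<in> borel_measurable M" "g \<in> borel_measurable M"
  shows "(\<lambda>x. cc (f x) (g x)) \<in> borel_measurable M"
  unfolding mkcop_def by measurable

lemma rep_exist:
  assumes mart_g
  shows "AE w in lborel \<Otimes>\<^sub>M lborel. p (snd w) \<noteq> 0 \<longrightarrow>
        q (snd w) (fst w) = cc (P (fst w)) (P (snd w)) * p (fst w)"
proof -
  have ae: "AE y in lborel. AE z in lborel. p z \<noteq> 0 \<longrightarrow> q z y = cc (P y) (P z) * p y"
    using good_ae zero_part[OF assms]
  proof eventually_elim
    case (elim y)
    show ?case using good_ae elim(2)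
    proof (cases "p y = 0")
      case True
      with elim(2) have "AE z in lborel. 0 < p z \<longrightarrow> q z y = 0" by simp
      then show ?thesis
        by eventually_elim (use True pnn in \<open>auto simp: less_le\<close>)
    next
      case False
      then have py: "0 < p y" using pnn[of y] by simp
      with elim(1) have gy: "Q (P y) = y" "0 < P y" "P y < 1" by auto
      show ?thesis using good_ae
      proof eventually_elim
        case (elim z)
        show ?case
        proof
          assume "p z \<noteq> 0"
          then have pz: "0 < p z" using pnn[of z] by simp
          with elim have gz: "Q (P z) = z" "0 < P z" "P z < 1" by auto
          show "q z y = cc (P y) (P z) * p y"
            using gy gz py by (simp add: mkcop_def)
        qed
      qed
    qed
  qed
  have "{w \<in> space (lborel \<Otimes>\<^sub>M lborel). p (snd w) \<noteq> 0 \<longrightarrow>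
        q (snd w) (fst w) = cc (P (fst w)) (P (snd w)) * p (fst w)} \<in> sets (lborel \<Otimes>\<^sub>M lborel)"
    by measurable
  then show ?thesis
    using ae lborel_pair.AE_pair_iff[of "\<lambda>y z. p z \<noteq> 0 \<longrightarrow> q z y = cc (P y) (P z) * p y"] by simp
qed

lemma cc_meas: "(\<lambda>w. cc (fst w) (snd w)) \<in> borel_measurable (lborel \<Otimes>\<^sub>M lborel)"
  by measurable

lemma AE_not01: "AE v in lborel. v \<noteq> 0 \<and> v \<noteq> (1::real)"
  using AE_lborel_singleton[of 0] AE_lborel_singleton[of 1] by eventually_elim auto

lemma K1_ae:
  assumes mart_g
  shows "AE u in lborel. 0 < u \<and> u < 1 \<longrightarrow>
     (\<integral>\<^sup>+ v. indicator {0..1} v * ennreal (cc u v) \<partial>lborel) = 1"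
proof -
  have "AE u in lborel. 0 < u \<and> u < 1 \<longrightarrow>
      (0 < p (Q u) \<and> (\<integral>\<^sup>+ z. ennreal (q z (Q u) * p z) \<partial>lborel) = ennreal (p (Q u)))"
  proof (rule AE_Q_to_P)
    show "{y. 0 < p y \<and> (\<integral>\<^sup>+ z. ennreal (q z y * p z) \<partial>lborel) = ennreal (p y)} \<in> sets borel"
      by measurable
    show "AE y in lborel. 0 < p y \<longrightarrow>
        0 < p y \<and> (\<integral>\<^sup>+ z. ennreal (q z y * p z) \<partial>lborel) = ennreal (p y)"
      using Mstar[OF assms] by eventually_elim auto
  qed
  then show ?thesis using AE_not01
  proof eventually_elim
    case (elim u)
    show ?case
    proof
      assume u: "0 < u \<and> u < 1"
      define y where "y = Q u"
      with elim u have py: "0 < p y" and my: "(\<integral>\<^sup>+ z. ennreal (q z y * p z) \<partial>lborel) = ennreal (p y)"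
        by auto
      have "(\<integral>\<^sup>+ v. indicator {0..1} v * ennreal (cc u v) \<partial>lborel)
          = (\<integral>\<^sup>+ v. indicator {0<..<1} v * ennreal (q (Q v) y / p y) \<partial>lborel)"
        using AE_not01
      proof (rule nn_integral_cong_AE[OF eventually_mono])
        fix v :: real assume "v \<noteq> 0 \<and> v \<noteq> 1"
        then show "indicator {0..1} v * ennreal (cc u v) = indicator {0<..<1} v * ennreal (q (Q v) y / p y)"
          using u py by (auto simp: mkcop_def y_def indicator_def)
      qed
      also have "\<dots> = (\<integral>\<^sup>+ z. ennreal (p z) * ennreal (q z y / p y) \<partial>lborel)"
        by (subst nn_Q) auto
      also have "\<dots> = (\<integral>\<^sup>+ z. ennreal (q z y * p z) * ennreal (1 / p y) \<partial>lborel)"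
        using py by (intro nn_integral_cong) (auto simp: ennreal_mult[symmetric] q_nn pnn)
      also have "\<dots> = ennreal (p y) * ennreal (1 / p y)"
        by (subst nn_integral_multc) (auto simp: my)
      also have "\<dots> = 1" using py by (simp add: ennreal_mult[symmetric])
      finally show "(\<integral>\<^sup>+ v. indicator {0..1} v * ennreal (cc u v) \<partial>lborel) = 1" .
    qed
  qed
qed

lemma marg1:
  assumes mart_g and a: "0 \<le> a" "a \<le> 1"
  shows "biv_cdf cc a 1 = ennreal a"
proof -
  have "biv_cdf cc a 1 = (\<integral>\<^sup>+ u. indicator {0..a} u *
            (\<integral>\<^sup>+ v. indicator {0..1} v * ennreal (cc u v) \<partial>lborel) \<partial>lborel)"
    by (rule biv1[OF cc_meas])
  also have "\<dots> = (\<integral>\<^sup>+ u. indicator {0..a} u \<partial>lborel)"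
    using K1_ae[OF assms(1)] AE_not01
  proof (rule nn_integral_cong_AE[OF eventually_mono[OF eventually_conj]])
    fix u :: real
    assume "(0 < u \<and> u < 1 \<longrightarrow> (\<integral>\<^sup>+ v. indicator {0..1} v * ennreal (cc u v) \<partial>lborel) = 1) \<and> u \<noteq> 0 \<and> u \<noteq> 1"
    then show "indicator {0..a} u * (\<integral>\<^sup>+ v. indicator {0..1} v * ennreal (cc u v) \<partial>lborel) = indicator {0..a} u"
      using a by (auto simp: indicator_def)
  qed
  also have "\<dots> = ennreal a" using a by simp
  finally show ?thesis .
qed

lemma h_le1: "(\<integral>\<^sup>+ u. indicator {0..1} u * ennreal (cc u v) \<partial>lborel) \<le> 1"
proof (cases "0 < v \<and> v < 1")
  case False
  then have "(\<integral>\<^sup>+ u. indicator {0..1} u * ennreal (cc u v) \<partial>lborel) = (\<integral>\<^sup>+ u. indicator {0..1::real} u \<partial>lborel)"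
    by (intro nn_integral_cong) (auto simp: mkcop_def)
  then show ?thesis by simp
next
  case True
  define z where "z = Q v"
  define g where "g y = (if 0 < p y then q z y / p y else 1)" for y
  have gm[measurable]: "g \<in> borel_measurable borel" unfolding g_def by measurable
  have "(\<integral>\<^sup>+ u. indicator {0..1} u * ennreal (cc u v) \<partial>lborel)
      = (\<integral>\<^sup>+ u. indicator {0<..<1} u * ennreal (g (Q u)) \<partial>lborel)"
    using AE_not01
  proof (rule nn_integral_cong_AE[OF eventually_mono])
    fix u :: real assume "u \<noteq> 0 \<and> u \<noteq> 1"
    then show "indicator {0..1} u * ennreal (cc u v) = indicator {0<..<1} u * ennreal (g (Q u))"
      using True by (auto simp: mkcop_def g_def z_def indicator_def)
  qed
  also have "\<dots> = (\<integral>\<^sup>+ y. ennreal (p y) * ennreal (g y) \<partial>lborel)"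
    by (subst nn_Q) auto
  also have "\<dots> \<le> (\<integral>\<^sup>+ y. ennreal (q z y) \<partial>lborel)"
  proof (intro nn_integral_mono)
    fix y
    show "ennreal (p y) * ennreal (g y) \<le> ennreal (q z y)"
    proof (cases "0 < p y")
      case True
      then show ?thesis by (simp add: g_def ennreal_mult[symmetric] q_nn)
    next
      case False
      then have "p y = 0" using pnn[of y] by simp
      then show ?thesis by simp
    qed
  qed
  also have "\<dots> = 1" by (rule q_int1)
  finally show ?thesis .
qed

lemma marg2:
  assumes mart_g and a: "0 \<le> a" "a \<le> 1"
  shows "biv_cdf cc 1 a = ennreal a"
proof -
  have hm: "(\<lambda>v. \<integral>\<^sup>+ u. indicator {0..1} u * ennreal (cc u v) \<partial>lborel) \<in> borel_measurable lborel"
    by measurable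
  have tot: "(\<integral>\<^sup>+ v. indicator {0..1} v * (\<integral>\<^sup>+ u. indicator {0..1} u * ennreal (cc u v) \<partial>lborel) \<partial>lborel) = 1"
    using marg1[OF assms(1), of 1] biv2[OF cc_meas, of 1 1] by simp
  show ?thesis
    unfolding biv2[OF cc_meas]
    by (rule split01[OF hm h_le1 tot a])
qed

lemma cop_exist:
  assumes mart_g
  shows "copula_density cc"
  unfolding copula_density_def
proof (intro conjI ballI)
  show "(\<lambda>w. cc (fst w) (snd w)) \<in> borel_measurable (lborel \<Otimes>\<^sub>M lborel)" by (rule cc_meas)
  fix u v :: real
  show "0 \<le> cc u v" by (auto simp: mkcop_def q_nn pnn)
next
  fix a :: real assume "a \<in> {0..1}"
  then show "biv_cdf cc a 1 = ennreal a" "biv_cdf cc 1 a = ennreal a"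
    using marg1[OF assms] marg2[OF assms] by auto
qed

end

lemma cdf_clamp:
  fixes h :: "real \<Rightarrow> ennreal"
  assumes hm[measurable]: "h \<in> borel_measurable borel"
    and H: "\<And>a. 0 \<le> a \<Longrightarrow> a \<le> 1 \<Longrightarrow> (\<integral>\<^sup>+ u. indicator {0..a} u * h u \<partial>lborel) = ennreal a"
  shows "real_distribution (density lborel (\<lambda>u. indicator {0..1} u * h u))"
    and "cdf (density lborel (\<lambda>u. indicator {0..1} u * h u)) x = max 0 (min 1 x)"
proof -
  have em: "emeasure (density lborel (\<lambda>u. indicator {0..1} u * h u)) {..x} = ennreal (max 0 (min 1 x))" for x
  proof -
    have "emeasure (density lborel (\<lambda>u. indicator {0..1} u * h u)) {..x}
        = (\<integral>\<^sup>+ u. indicator {0..1} u * h u * indicator {..x} u \<partial>lborel)"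
      by (subst emeasure_density) auto
    also have "\<dots> = ennreal (max 0 (min 1 x))"
    proof (cases "x < 0")
      case True
      then have "(\<integral>\<^sup>+ u. indicator {0..1} u * h u * indicator {..x} u \<partial>lborel) = (\<integral>\<^sup>+ (u::real). 0 \<partial>lborel)"
        by (intro nn_integral_cong) (auto simp: indicator_def)
      then show ?thesis using True by simp
    next
      case False
      show ?thesis
      proof (cases "x \<le> 1")
        case True
        have "(\<integral>\<^sup>+ u. indicator {0..1} u * h u * indicator {..x} u \<partial>lborel) = (\<integral>\<^sup>+ u. indicator {0..x} u * h u \<partial>lborel)"
          using True False by (intro nn_integral_cong) (auto simp: indicator_def)
        then show ?thesis using True False H[of x] by simp
      next
        case False2: False
        have "(\<integral>\<^sup>+ u. indicator {0..1} u * h u * indicator {..x} u \<partial>lborel) = (\<integral>\<^sup>+ u. indicator {0..1} u * h u \<partial>lborel)"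
          using False2 by (intro nn_integral_cong) (auto simp: indicator_def)
        then show ?thesis using False2 H[of 1] by simp
      qed
    qed
    finally show ?thesis .
  qed
  have "emeasure (density lborel (\<lambda>u. indicator {0..1} u * h u)) UNIV = 1"
  proof -
    have "emeasure (density lborel (\<lambda>u. indicator {0..1} u * h u)) UNIV
        = (\<integral>\<^sup>+ u. indicator {0..1} u * h u \<partial>lborel)"
      by (subst emeasure_density) auto
    then show ?thesis using H[of 1] by simp
  qed
  then show rd: "real_distribution (density lborel (\<lambda>u. indicator {0..1} u * h u))"
    unfolding real_distribution_def real_distribution_axioms_def
    by (auto intro!: prob_spaceI)
  show "cdf (density lborel (\<lambda>u. indicator {0..1} u * h u)) x = max 0 (min 1 x)"
    unfolding cdf_def measure_def em by (rule enn2real_ennreal) simp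
qed

lemma copula_row1:
  assumes cop: "copula_density c"
  shows "AE u in lborel. 0 < u \<and> u < 1 \<longrightarrow> (\<integral>\<^sup>+ v. indicator {0..1} v * ennreal (c u v) \<partial>lborel) = 1"
proof -
  have cm[measurable]: "(\<lambda>w. c (fst w) (snd w)) \<in> borel_measurable (lborel \<Otimes>\<^sub>M lborel)"
    using cop by (simp add: copula_density_def)
  define g where "g u = (\<integral>\<^sup>+ v. indicator {0..1} v * ennreal (c u v) \<partial>lborel)" for u
  have gm[measurable]: "g \<in> borel_measurable borel"
  proof -
    have "(\<lambda>w. indicator {0..1} (snd w) * ennreal (c (fst w) (snd w))) \<in> borel_measurable (lborel \<Otimes>\<^sub>M lborel)"
      by measurable
    then have "g \<in> borel_measurable lborel"
      unfolding g_def using lborel.borel_measurable_nn_integral_fst by auto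
    then show ?thesis by (simp add: measurable_lborel1)
  qed
  have H: "(\<integral>\<^sup>+ u. indicator {0..a} u * g u \<partial>lborel) = ennreal a" if "0 \<le> a" "a \<le> 1" for a
    using cop that biv1[OF cm, of a 1] by (simp add: copula_density_def g_def)
  have H1: "(\<integral>\<^sup>+ u. indicator {0..a} u * (\<lambda>_. 1) u \<partial>lborel) = ennreal a" if "0 \<le> a" "a \<le> 1" for a :: real
    using that by simp
  have m1: "(\<lambda>_. 1::ennreal) \<in> borel_measurable borel" by simp
  have r1: "real_distribution (density lborel (\<lambda>u. indicator {0..1} u * g u))"
    by (rule cdf_clamp(1)[OF gm]) (rule H)
  have r2: "real_distribution (density lborel (\<lambda>u. indicator {0..1} u * (\<lambda>_. 1) u))"
    by (rule cdf_clamp(1)[OF m1]) (rule H1)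
  have c1: "cdf (density lborel (\<lambda>u. indicator {0..1} u * g u)) x = max 0 (min 1 x)" for x
    by (rule cdf_clamp(2)[OF gm]) (rule H)
  have c2: "cdf (density lborel (\<lambda>u. indicator {0..1} u * (\<lambda>_. 1) u)) x = max 0 (min 1 x)" for x
    by (rule cdf_clamp(2)[OF m1]) (rule H1)
  have eq: "density lborel (\<lambda>u. indicator {0..1} u * g u) = density lborel (\<lambda>u. indicator {0..1} u * (\<lambda>_. 1) u)"
    by (rule cdf_unique[OF r1 r2]) (rule ext, simp only: c1 c2)
  have "AE u in lborel. indicator {0..1} u * g u = indicator {0..1} u * (\<lambda>_. 1) u"
    using eq by (subst (asm) sigma_finite_measure.density_unique_iff[of lborel]) (auto intro: lborel.sigma_finite_measure_axioms)
  then show ?thesis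
    by eventually_elim (auto simp: g_def indicator_def)
qed

context pdens
begin

lemma Mu_pair: "Mu p \<Otimes>\<^sub>M Mu p = density (lborel \<Otimes>\<^sub>M lborel) (\<lambda>(x, y). ennreal (p x) * ennreal (p y))"
  unfolding Mu_def
  by (rule pair_measure_density) (auto intro: lborel.sigma_finite_measure_axioms
      prob_space_Mu[unfolded Mu_def] prob_space_imp_sigma_finite)

lemma Unif_pair: "Unif \<Otimes>\<^sub>M Unif = density (lborel \<Otimes>\<^sub>M lborel) (\<lambda>(x, y). indicator {0<..<1} x * indicator {0<..<1::real} y)"
  unfolding Unif_def
  by (rule pair_measure_density) (auto intro: lborel.sigma_finite_measure_axioms
      prob_space_Unif[unfolded Unif_def] prob_space_imp_sigma_finite)

lemma Unif_pair_distr: "distr (Mu p \<Otimes>\<^sub>M Mu p) (lborel \<Otimes>\<^sub>M lborel) (\<lambda>(x, y). (dens_cdf p x, dens_cdf p y)) = Unif \<Otimes>\<^sub>M Unif"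
proof -
  have "distr (Mu p) lborel (dens_cdf p) \<Otimes>\<^sub>M distr (Mu p) lborel (dens_cdf p)
      = distr (Mu p \<Otimes>\<^sub>M Mu p) (lborel \<Otimes>\<^sub>M lborel) (\<lambda>(x, y). (dens_cdf p x, dens_cdf p y))"
    by (rule pair_measure_distr) (auto simp: Unif_distr measurable_cong_sets[OF sets_Mu refl] intro: prob_space_Unif prob_space_imp_sigma_finite)
  then show ?thesis by (simp add: Unif_distr)
qed

lemma AE_prod_transfer:
  assumes E: "{w. E w} \<in> sets (borel \<Otimes>\<^sub>M borel)"
    and ae: "AE w in lborel \<Otimes>\<^sub>M lborel. 0 < p (fst w) \<and> 0 < p (snd w) \<longrightarrow>
                 E (dens_cdf p (fst w), dens_cdf p (snd w))"
  shows "AE w in lborel \<Otimes>\<^sub>M lborel. 0 < fst w \<and> fst w < 1 \<and> 0 < snd w \<and> snd w < 1 \<longrightarrow> E w"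
proof -
  have Es: "{w \<in> space (lborel \<Otimes>\<^sub>M lborel). E w} \<in> sets (lborel \<Otimes>\<^sub>M lborel)"
    using E by (simp add: space_pair_measure)
  have "AE w in Mu p \<Otimes>\<^sub>M Mu p. E (dens_cdf p (fst w), dens_cdf p (snd w))"
    unfolding Mu_pair
    by (subst AE_density) (use ae in \<open>auto simp: split_beta ennreal_zero_less_mult_iff elim!: eventually_mono\<close>)
  then have "AE w in distr (Mu p \<Otimes>\<^sub>M Mu p) (lborel \<Otimes>\<^sub>M lborel) (\<lambda>(x, y). (dens_cdf p x, dens_cdf p y)). E w"
    using Es by (subst AE_distr_iff) (auto simp: split_beta Mu_def)
  then have "AE w in Unif \<Otimes>\<^sub>M Unif. E w" unfolding Unif_pair_distr .
  then show ?thesis unfolding Unif_pair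
    by (subst (asm) AE_density) (auto simp: split_beta ennreal_zero_less_mult_iff elim!: eventually_mono)
qed

end

context pq
begin

definition rep_g :: "(real \<Rightarrow> real \<Rightarrow> real) \<Rightarrow> bool" where
  "rep_g c \<longleftrightarrow> (AE w in lborel \<Otimes>\<^sub>M lborel. p (snd w) \<noteq> 0 \<longrightarrow>
        q (snd w) (fst w) = c (P (fst w)) (P (snd w)) * p (fst w))"

lemma AE_bd: "AE (w::real\<times>real) in lborel \<Otimes>\<^sub>M lborel. fst w \<noteq> 0 \<and> fst w \<noteq> 1 \<and> snd w \<noteq> 0 \<and> snd w \<noteq> (1::real)"
proof -
  have ae: "AE (x::real) in lborel. AE y in lborel. x \<noteq> 0 \<and> x \<noteq> 1 \<and> y \<noteq> 0 \<and> y \<noteq> (1::real)"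
  proof (rule eventually_mono[OF AE_not01])
    fix x :: real assume x: "x \<noteq> 0 \<and> x \<noteq> 1"
    show "AE y in lborel. x \<noteq> 0 \<and> x \<noteq> 1 \<and> y \<noteq> 0 \<and> y \<noteq> (1::real)"
      by (rule eventually_mono[OF AE_not01]) (use x in auto)
  qed
  have m: "{w \<in> space (lborel \<Otimes>\<^sub>M lborel). fst w \<noteq> 0 \<and> fst w \<noteq> 1 \<and> snd w \<noteq> 0 \<and> snd w \<noteq> (1::real)}
      \<in> sets (lborel \<Otimes>\<^sub>M lborel)" by measurable
  show ?thesis
    using iffD1[OF lborel_pair.AE_pair_iff[of "\<lambda>x y. x \<noteq> 0 \<and> x \<noteq> 1 \<and> y \<noteq> 0 \<and> y \<noteq> (1::real)", OF m] ae] .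
qed

lemma uniq:
  assumes c: "copula_density c" and c': "copula_density c'" and r: "rep_g c" and r': "rep_g c'"
  shows "AE w in lborel \<Otimes>\<^sub>M lborel. w \<in> {0..1} \<times> {0..1} \<longrightarrow> c' (fst w) (snd w) = c (fst w) (snd w)"
proof -
  have cm[measurable]: "(\<lambda>w. c (fst w) (snd w)) \<in> borel_measurable (borel \<Otimes>\<^sub>M borel)"
    using c by (simp add: copula_density_def measurable_lborel1 cong: measurable_cong_sets)
  have c'm[measurable]: "(\<lambda>w. c' (fst w) (snd w)) \<in> borel_measurable (borel \<Otimes>\<^sub>M borel)"
    using c' by (simp add: copula_density_def measurable_lborel1 cong: measurable_cong_sets)
  have "AE w in lborel \<Otimes>\<^sub>M lborel. 0 < p (fst w) \<and> 0 < p (snd w) \<longrightarrow>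
      (\<lambda>w. c' (fst w) (snd w) = c (fst w) (snd w)) (P (fst w), P (snd w))"
    using r r' unfolding rep_g_def by eventually_elim auto
  then have "AE w in lborel \<Otimes>\<^sub>M lborel. 0 < fst w \<and> fst w < 1 \<and> 0 < snd w \<and> snd w < 1 \<longrightarrow>
      c' (fst w) (snd w) = c (fst w) (snd w)"
  proof (intro AE_prod_transfer[where E="\<lambda>w. c' (fst w) (snd w) = c (fst w) (snd w)"])
    have "{w \<in> space (borel \<Otimes>\<^sub>M borel). c' (fst w) (snd w) = c (fst w) (snd w)} \<in> sets (borel \<Otimes>\<^sub>M borel)"
      by measurable
    then show "{w. c' (fst w) (snd w) = c (fst w) (snd w)} \<in> sets (borel \<Otimes>\<^sub>M borel)"
      by (simp add: space_pair_measure)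
  qed simp
  then show ?thesis using AE_bd by eventually_elim (auto simp: less_le)
qed

end

context pq
begin

lemma conv:
  assumes c: "copula_density c" and r: "rep_g c"
  shows mart_g
proof -
  have cm[measurable]: "(\<lambda>w. c (fst w) (snd w)) \<in> borel_measurable (borel \<Otimes>\<^sub>M borel)"
    using c by (simp add: copula_density_def measurable_lborel1 cong: measurable_cong_sets)
  have cnn: "0 \<le> c (P y) (P z)" for y z
    using c P_nonneg[of y] P_le1[of y] P_nonneg[of z] P_le1[of z] by (simp add: copula_density_def)
  define g where "g u = (\<integral>\<^sup>+ v. indicator {0..1} v * ennreal (c u v) \<partial>lborel)" for u
  have gm[measurable]: "g \<in> borel_measurable borel"
    unfolding g_def by measurable
  have A: "AE y in lborel. AE z in lborel. q z y * p z = c (P y) (P z) * p y * p z"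
  proof -
    have "AE w in lborel \<Otimes>\<^sub>M lborel. q (snd w) (fst w) * p (snd w) = c (P (fst w)) (P (snd w)) * p (fst w) * p (snd w)"
      using r unfolding rep_g_def by eventually_elim auto
    from lborel_pair.AE_pair[OF this] show ?thesis by simp
  qed
  have C: "AE y in lborel. 0 < p y \<longrightarrow> g (P y) = 1"
  proof (rule AE_P_to_U)
    show "{x. g x = 1} \<in> sets borel" by measurable
    show "AE u in lborel. 0 < u \<and> u < 1 \<longrightarrow> g u = 1"
      using copula_row1[OF c] unfolding g_def .
  qed
  show ?thesis unfolding mart_g_def using A C
  proof eventually_elim
    case (elim y)
    have mv: "(\<lambda>v. c (P y) v) \<in> borel_measurable borel"
      using measurable_Pair2[OF cm, of "P y"] by simp
    have mz[measurable]: "(\<lambda>z. c (P y) (P z)) \<in> borel_measurable borel"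
      using measurable_compose[OF P_meas mv] by (simp add: comp_def)
    have "(\<integral>z. q z y * p z \<partial>lborel) = (\<integral>z. p y * (c (P y) (P z) * p z) \<partial>lborel)"
      by (rule integral_cong_AE) (use elim(1) in \<open>auto elim!: eventually_mono\<close>)
    also have "\<dots> = p y * (\<integral>z. c (P y) (P z) * p z \<partial>lborel)"
      by (rule integral_mult_right_zero)
    also have "\<dots> = p y"
    proof (cases "p y = 0")
      case True then show ?thesis by simp
    next
      case False
      then have py: "0 < p y" using pnn[of y] by simp
      have "(\<integral>\<^sup>+ z. ennreal (c (P y) (P z) * p z) \<partial>lborel) = (\<integral>\<^sup>+ z. ennreal (p z) * ennreal (c (P y) (P z)) \<partial>lborel)"
        by (intro nn_integral_cong) (simp add: ennreal_mult[symmetric] cnn pnn mult.commute)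
      also have "\<dots> = (\<integral>\<^sup>+ v. indicator {0<..<1} v * ennreal (c (P y) v) \<partial>lborel)"
        by (rule nn_P) (use mv in measurable)
      also have "\<dots> = g (P y)"
        unfolding g_def
      proof (rule nn_integral_cong_AE[OF eventually_mono[OF AE_not01]])
        fix v :: real assume "v \<noteq> 0 \<and> v \<noteq> 1"
        then show "indicator {0<..<1} v * ennreal (c (P y) v) = indicator {0..1} v * ennreal (c (P y) v)"
          by (auto simp: indicator_def)
      qed
      also have "\<dots> = 1" using elim(2) py by simp
      finally have nn1: "(\<integral>\<^sup>+ z. ennreal (c (P y) (P z) * p z) \<partial>lborel) = 1" .
      have int: "integrable lborel (\<lambda>z. c (P y) (P z) * p z)"
      proof (rule integrableI_nonneg)
        show "(\<lambda>z. c (P y) (P z) * p z) \<in> borel_measurable lborel" by measurable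
        show "AE x in lborel. 0 \<le> c (P y) (P x) * p x" by (auto simp: cnn pnn)
        show "(\<integral>\<^sup>+ z. ennreal (c (P y) (P z) * p z) \<partial>lborel) < \<infinity>" using nn1 by simp
      qed
      have "ennreal (\<integral>z. c (P y) (P z) * p z \<partial>lborel) = 1"
        using nn1 by (subst nn_integral_eq_integral[OF int, symmetric]) (auto simp: cnn pnn)
      then show ?thesis by simp
    qed
    finally show ?case .
  qed
qed

end

lemma pqI:
  assumes "prob_density p0" "\<And>z. prob_density (q z)"
    "(\<lambda>w. q (snd w) (fst w)) \<in> borel_measurable (lborel \<Otimes>\<^sub>M lborel)"
  shows "pq p0 q"
  using assms by (simp add: pq_def pq_axioms_def pdens_def)

theorem corollary1:
  fixes p :: "nat \<Rightarrow> real list \<Rightarrow> real \<Rightarrow> real"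
  assumes dens: "\<forall>i ys. length ys = i \<longrightarrow> prob_density (p i ys)"
    and meas: "\<forall>i ys. length ys = i \<longrightarrow>
      (\<lambda>w. p (Suc i) (ys @ [snd w]) (fst w)) \<in> borel_measurable (lborel \<Otimes>\<^sub>M lborel)"
  shows "martingale_cond p \<longleftrightarrow>
    (\<exists>c. copula_rep p c \<and>
       (\<forall>c'. copula_rep p c' \<longrightarrow>
          (\<forall>i ys. length ys = i \<longrightarrow>
             (AE w in lborel \<Otimes>\<^sub>M lborel. w \<in> {0..1} \<times> {0..1} \<longrightarrow>
                c' (Suc i) ys (fst w) (snd w) = c (Suc i) ys (fst w) (snd w)))))"
proof -
  have PQ: "pq (p i ys) (\<lambda>z. p (Suc i) (ys @ [z]))" if "length ys = i" for i ys
  proof (rule pqI)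
    show "prob_density (p i ys)" using dens that by auto
    fix z :: real
    have "length (ys @ [z]) = Suc i" using that by simp
    then show "prob_density (p (Suc i) (ys @ [z]))" using dens by blast
  next
    show "(\<lambda>w. p (Suc i) (ys @ [snd w]) (fst w)) \<in> borel_measurable (lborel \<Otimes>\<^sub>M lborel)"
      using meas that by auto
  qed
  have mart_iff: "martingale_cond p \<longleftrightarrow>
      (\<forall>i ys. length ys = i \<longrightarrow> pq.mart_g (p i ys) (\<lambda>z. p (Suc i) (ys @ [z])))"
    unfolding martingale_cond_def
    by (intro iff_allI) (auto simp: pq.mart_g_def[OF PQ])
  have rep_iff: "copula_rep p c \<longleftrightarrow>
      (\<forall>i ys. length ys = i \<longrightarrow> copula_density (c (Suc i) ys) \<and>
         pq.rep_g (p i ys) (\<lambda>z. p (Suc i) (ys @ [z])) (c (Suc i) ys))" for c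
    unfolding copula_rep_def
    by (intro iff_allI) (auto simp: pq.rep_g_def[OF PQ])
  show ?thesis
  proof
    assume m: "martingale_cond p"
    define C where "C k ys = mkcop (p (k - 1) ys) (\<lambda>z. p k (ys @ [z]))" for k ys
    have C: "copula_rep p C"
      unfolding rep_iff
    proof (intro allI impI conjI)
      fix i and ys :: "real list" assume l: "length ys = i"
      have mg: "pq.mart_g (p i ys) (\<lambda>z. p (Suc i) (ys @ [z]))" using m l mart_iff by blast
      show "copula_density (C (Suc i) ys)"
        using pq.cop_exist[OF PQ[OF l] mg] by (simp add: C_def)
      show "pq.rep_g (p i ys) (\<lambda>z. p (Suc i) (ys @ [z])) (C (Suc i) ys)"
        using pq.rep_exist[OF PQ[OF l] mg] by (simp add: C_def pq.rep_g_def[OF PQ[OF l]])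
    qed
    show "\<exists>c. copula_rep p c \<and>
       (\<forall>c'. copula_rep p c' \<longrightarrow>
          (\<forall>i ys. length ys = i \<longrightarrow>
             (AE w in lborel \<Otimes>\<^sub>M lborel. w \<in> {0..1} \<times> {0..1} \<longrightarrow>
                c' (Suc i) ys (fst w) (snd w) = c (Suc i) ys (fst w) (snd w))))"
    proof (intro exI conjI allI impI)
      show "copula_rep p C" by (rule C)
      fix c' i and ys :: "real list" assume c': "copula_rep p c'" and l: "length ys = i"
      show "AE w in lborel \<Otimes>\<^sub>M lborel. w \<in> {0..1} \<times> {0..1} \<longrightarrow>
                c' (Suc i) ys (fst w) (snd w) = C (Suc i) ys (fst w) (snd w)"
        using C c' l unfolding rep_iff by (intro pq.uniq[OF PQ[OF l]]) auto
    qed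
  next
    assume "\<exists>c. copula_rep p c \<and>
       (\<forall>c'. copula_rep p c' \<longrightarrow>
          (\<forall>i ys. length ys = i \<longrightarrow>
             (AE w in lborel \<Otimes>\<^sub>M lborel. w \<in> {0..1} \<times> {0..1} \<longrightarrow>
                c' (Suc i) ys (fst w) (snd w) = c (Suc i) ys (fst w) (snd w))))"
    then obtain c where c: "copula_rep p c" by blast
    show "martingale_cond p"
      unfolding mart_iff
    proof (intro allI impI)
      fix i and ys :: "real list" assume l: "length ys = i"
      show "pq.mart_g (p i ys) (\<lambda>z. p (Suc i) (ys @ [z]))"
        using c l unfolding rep_iff by (intro pq.conv[OF PQ[OF l]]) auto
    qed
  qed
qed

end
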